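(* There exists a system $\dot x=f(x,u)$, $y=h(x)$, with $f:\mathbb{R}^n\times\mathbb{R}^m\to\mathbb{R}^n$ and $h:\mathbb{R}^n\to\mathbb{R}^p$ locally Lipschitz, $f(0,0)=0$, $h(0)=0$, which is ROS but not IOS.
   Context: Inputs are measurable, locally essentially bounded functions $u:[0,\infty)\to\mathbb{R}^m$; $\|u\|$ is the essential supremum of $|u(t)|$ (Euclidean norm). $x(\cdot,\xi,u)$ denotes the maximal solution of $\dot x=f(x,u)$, $x(0)=\xi$, and $y(t,\xi,u)=h(x(t,\xi,u))$. The system is forward complete if all such solutions are defined on $[0,\infty)$. Classes: $\mathcal{K}$ = continuous strictly increasing $\gamma:[0,\infty)\to[0,\infty)$ with $\gamma(0)=0$; $\mathcal{K}_\infty$ = unbounded $\mathcal{K}$ functions; $\mathcal{KL}$ = functions $\beta(s,t)$ of class $\mathcal{K}$ in $s$ and decreasing to $0$ in $t$. IOS: the system is forward complete and there exist $\beta\in\mathcal{KL}$, $\gamma\in\mathcal{K}$ with $|y(t,\xi,u)|\le\beta(|\xi|,t)+\gamma(\|u\|)$ for all $t\ge0$, $u$, $\xi$. ROS: the system is forward complete and there exists a smooth $\lambda\in\mathcal{K}_\infty$ such that the system $\dot x=f(x,d\,\lambda(|h(x)|))$, $y=h(x)$, with inputs $d$ measurable locally essentially bounded taking values in the closed unit ball of $\mathbb{R}^m$, is forward complete, and there exists $\beta\in\mathcal{KL}$ with $|y_\lambda(t,\xi,d)|\le\beta(|\xi|,t)$ for all $t\ge0$, $\xi$, $d$, where $y_\lambda(\cdot,\xi,d)$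 is the output of this closed-loop system from $\xi$ under $d$. *)

theory Defs
  imports "HOL-Analysis.Analysis" "HOL-Probability.Essential_Supremum"
begin

section \<open>Comparison functions (only values on [0,inf) matter)\<close>

definition class_K :: "(real \<Rightarrow> real) \<Rightarrow> bool" where
  "class_K g \<longleftrightarrow> continuous_on {0..} g \<and> strict_mono_on {0..} g \<and> g 0 = 0 \<and> (\<forall>s\<ge>0. g s \<ge> 0)"

definition class_Kinf :: "(real \<Rightarrow> real) \<Rightarrow> bool" where
  "class_Kinf g \<longleftrightarrow> class_K g \<and> (\<forall>M. \<exists>s\<ge>0. g s > M)"

definition class_KL :: "(real \<Rightarrow> real \<Rightarrow> real) \<Rightarrow> bool" where
  "class_KL b \<longleftrightarrow> (\<forall>t\<ge>0. class_K (\<lambda>s. b s t)) \<and>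
     (\<forall>s\<ge>0. antimono_on {0..} (b s) \<and> ((b s) \<longlongrightarrow> 0) at_top)"

definition smooth_nonneg :: "(real \<Rightarrow> real) \<Rightarrow> bool" where
  "smooth_nonneg g \<longleftrightarrow> (\<exists>D :: nat \<Rightarrow> real \<Rightarrow> real. D 0 = g \<and>
     (\<forall>k. \<forall>s\<ge>0. (D k has_real_derivative D (Suc k) s) (at s within {0..})))"

definition loc_lipschitz :: "('a::metric_space \<Rightarrow> 'b::metric_space) \<Rightarrow> bool" where
  "loc_lipschitz g \<longleftrightarrow> (\<forall>z. \<exists>r>0. \<exists>L. L-lipschitz_on (cball z r) g)"

definition admissible_input :: "(real \<Rightarrow> 'u::euclidean_space) \<Rightarrow> bool" where
  "admissible_input u \<longleftrightarrow> u \<in> borel_measurable (restrict_space lborel {0..}) \<and>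
     (\<forall>T\<ge>0. \<exists>B. AE t in lborel. t \<in> {0..T} \<longrightarrow> norm (u t) \<le> B)"

definition input_norm :: "(real \<Rightarrow> 'u::euclidean_space) \<Rightarrow> ereal" where
  "input_norm u = esssup (restrict_space lborel {0..}) (\<lambda>t. ereal (norm (u t)))"

definition is_solution_on ::
  "('x::euclidean_space \<Rightarrow> 'u \<Rightarrow> 'x) \<Rightarrow> (real \<Rightarrow> 'u) \<Rightarrow> 'x \<Rightarrow> ereal \<Rightarrow> (real \<Rightarrow> 'x) \<Rightarrow> bool" where
  "is_solution_on f u \<xi> T x \<longleftrightarrow> x 0 = \<xi> \<and> continuous_on {t. 0 \<le> t \<and> ereal t < T} x \<and>
     (\<forall>t. 0 \<le> t \<and> ereal t < T \<longrightarrow> ((\<lambda>s. f (x s) (u s)) has_integral (x t - \<xi>)) {0..t})"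

text \<open>Forward completeness w.r.t. a class of admissible inputs: every solution can be
  continued to [0,inf), i.e. the maximal solution is defined on [0,inf).  We phrase this as:
  every solution on some [0,T) is the restriction of a solution on [0,inf).\<close>
definition forward_complete_wrt ::
  "((real \<Rightarrow> 'u) \<Rightarrow> bool) \<Rightarrow> ('x::euclidean_space \<Rightarrow> 'u \<Rightarrow> 'x) \<Rightarrow> bool" where
  "forward_complete_wrt Adm f \<longleftrightarrow> (\<forall>u \<xi>. Adm u \<longrightarrow>
     (\<exists>x. is_solution_on f u \<xi> \<infinity> x) \<and>
     (\<forall>T x. is_solution_on f u \<xi> T x \<longrightarrow>
        (\<exists>x'. is_solution_on f u \<xi> \<infinity> x' \<and> (\<forall>t. 0 \<le> t \<and> ereal t < T \<longrightarrow> x' t = x t))))"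

definition forward_complete :: "('x::euclidean_space \<Rightarrow> 'u::euclidean_space \<Rightarrow> 'x) \<Rightarrow> bool" where
  "forward_complete f \<longleftrightarrow> forward_complete_wrt admissible_input f"

definition IOS :: "('x::euclidean_space \<Rightarrow> 'u::euclidean_space \<Rightarrow> 'x) \<Rightarrow> ('x \<Rightarrow> 'y::euclidean_space) \<Rightarrow> bool" where
  "IOS f h \<longleftrightarrow> forward_complete f \<and>
     (\<exists>\<beta> \<gamma>. class_KL \<beta> \<and> class_K \<gamma> \<and>
       (\<forall>u \<xi> x t. admissible_input u \<longrightarrow> input_norm u < \<infinity> \<longrightarrow>
          is_solution_on f u \<xi> \<infinity> x \<longrightarrow> t \<ge> 0 \<longrightarrow>
          norm (h (x t)) \<le> \<beta> (norm \<xi>) t + \<gamma> (real_of_ereal (input_norm u))))"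

definition admissible_dist :: "(real \<Rightarrow> 'u::euclidean_space) \<Rightarrow> bool" where
  "admissible_dist d \<longleftrightarrow> admissible_input d \<and> (\<forall>t\<ge>0. norm (d t) \<le> 1)"

definition ROS :: "('x::euclidean_space \<Rightarrow> 'u::euclidean_space \<Rightarrow> 'x) \<Rightarrow> ('x \<Rightarrow> 'y::euclidean_space) \<Rightarrow> bool" where
  "ROS f h \<longleftrightarrow> forward_complete f \<and>
     (\<exists>lam. class_Kinf lam \<and> smooth_nonneg lam \<and>
        (let fcl = (\<lambda>x d. f x (lam (norm (h x)) *\<^sub>R d)) in
          forward_complete_wrt admissible_dist fcl \<and>
          (\<exists>\<beta>. class_KL \<beta> \<and>
            (\<forall>d \<xi> x t. admissible_dist d \<longrightarrow> is_solution_on fcl d \<xi> \<infinity> x \<longrightarrow> t \<ge> 0 \<longrightarrow>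
               norm (h (x t)) \<le> \<beta> (norm \<xi>) t))))"

end

theory Submission
  imports Defs
begin

lemma rho_deriv:
  assumes "1 + 2*R*t > 0"
  shows "((\<lambda>t. 1/sqrt(1+2*R*t)) has_real_derivative (-R * (1/sqrt(1+2*R*t))^3)) (at t)"
proof -
  define S where "S = sqrt (1+2*R*t)"
  have s: "S > 0" using assms by (simp add: S_def)
  have d1: "((\<lambda>t. 1+2*R*t) has_real_derivative 2*R) (at t)"
    by (auto intro!: derivative_eq_intros)
  have d2: "((\<lambda>t. sqrt (1+2*R*t)) has_real_derivative (inverse S / 2 * (2*R))) (at t)"
    unfolding S_def by (rule DERIV_chain2[OF DERIV_real_sqrt d1]) (use assms in simp)
  have d3: "((\<lambda>t. inverse (sqrt (1+2*R*t))) has_real_derivative (- ((inverse S / 2 * (2*R)) * inverse (S ^ Suc (Suc 0))))) (at t)"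
    using DERIV_inverse_fun[OF d2] s by (simp only: S_def)
  have e: "(- ((inverse S / 2 * (2*R)) * inverse (S ^ Suc (Suc 0)))) = (-R * (1/S)^3)"
    using s by (simp add: inverse_eq_divide power_divide eval_nat_numeral)
  show ?thesis using d3 unfolding e unfolding S_def unfolding inverse_eq_divide .
qed

definition F1 :: "real \<Rightarrow> real \<Rightarrow> real" where "F1 p q = - q - (p\<^sup>2 + q\<^sup>2) * p"
definition F2 :: "real \<Rightarrow> real \<Rightarrow> real" where "F2 p q = p - (p\<^sup>2 + q\<^sup>2) * q"

definition RR :: "real^3 \<Rightarrow> real" where "RR \<xi> = (\<xi>$1)\<^sup>2 + (\<xi>$2)\<^sup>2"
definition rho :: "real^3 \<Rightarrow> real \<Rightarrow> real" where "rho \<xi> t = 1 / sqrt (1 + 2 * RR \<xi> * t)"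
definition Z1 :: "real^3 \<Rightarrow> real \<Rightarrow> real" where
  "Z1 \<xi> t = rho \<xi> t * (\<xi>$1 * cos t - \<xi>$2 * sin t)"
definition Z2 :: "real^3 \<Rightarrow> real \<Rightarrow> real" where
  "Z2 \<xi> t = rho \<xi> t * (\<xi>$1 * sin t + \<xi>$2 * cos t)"

lemma RR_nonneg: "RR \<xi> \<ge> 0" by (simp add: RR_def)

lemma trig_sq0: "(a * cc - b * ss)^2 + (a * ss + b * cc)^2 = (a^2+b^2) * (ss^2+cc^2)" for a b cc ss :: real
  by algebra

lemma trig_sq: "(a * cos t - b * sin t)\<^sup>2 + (a * sin t + b * cos t)\<^sup>2 = a\<^sup>2 + b\<^sup>2" for a b t :: real
  using trig_sq0[of a "cos t" b "sin t"] by simp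

lemma alg1: "-(r * w2) - (r^2 * R) * (r * w1) = r * (-w2) + (-R * r^3) * w1" for r w1 w2 R :: real
  by (simp add: power3_eq_cube power2_eq_square algebra_simps)
lemma alg2: "r * w1 - (r^2 * R) * (r * w2) = r * w1 + (-R * r^3) * w2" for r w1 w2 R :: real
  by (simp add: power3_eq_cube power2_eq_square algebra_simps)

lemma Z_sq: "(Z1 \<xi> t)\<^sup>2 + (Z2 \<xi> t)\<^sup>2 = (rho \<xi> t)\<^sup>2 * RR \<xi>"
proof -
  have "(Z1 \<xi> t)\<^sup>2 + (Z2 \<xi> t)\<^sup>2 = (rho \<xi> t)\<^sup>2 * ((\<xi>$1 * cos t - \<xi>$2 * sin t)\<^sup>2 + (\<xi>$1 * sin t + \<xi>$2 * cos t)\<^sup>2)"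
    unfolding Z1_def Z2_def power_mult_distrib by (rule distrib_left[symmetric])
  then show ?thesis by (simp add: trig_sq RR_def)
qed

lemma rho_deriv': assumes "t \<ge> 0" shows "(rho \<xi> has_real_derivative (- RR \<xi> * (rho \<xi> t)^3)) (at t)"
proof -
  have "1 + 2 * RR \<xi> * t > 0" using assms RR_nonneg[of \<xi>] by (simp add: add_pos_nonneg)
  from rho_deriv[OF this] show ?thesis unfolding rho_def[abs_def] by simp
qed

lemma Z1_deriv: assumes "t \<ge> 0" shows "(Z1 \<xi> has_real_derivative F1 (Z1 \<xi> t) (Z2 \<xi> t)) (at t)"
proof -
  have w: "((\<lambda>t. \<xi>$1 * cos t - \<xi>$2 * sin t) has_real_derivative (- \<xi>$1 * sin t - \<xi>$2 * cos t)) (at t)"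
    by (auto intro!: derivative_eq_intros)
  have "(Z1 \<xi> has_real_derivative (rho \<xi> t * (- \<xi>$1 * sin t - \<xi>$2 * cos t) + (- RR \<xi> * (rho \<xi> t)^3) * (\<xi>$1 * cos t - \<xi>$2 * sin t))) (at t)"
    unfolding Z1_def[abs_def] using DERIV_mult[OF rho_deriv'[OF assms] w] by (simp add: algebra_simps)
  moreover have "(rho \<xi> t * (- \<xi>$1 * sin t - \<xi>$2 * cos t) + (- RR \<xi> * (rho \<xi> t)^3) * (\<xi>$1 * cos t - \<xi>$2 * sin t)) = F1 (Z1 \<xi> t) (Z2 \<xi> t)"
    unfolding F1_def Z_sq using alg1[of "rho \<xi> t" "\<xi>$1 * sin t + \<xi>$2 * cos t" "RR \<xi>" "\<xi>$1 * cos t - \<xi>$2 * sin t"]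
    by (simp add: Z1_def Z2_def)
  ultimately show ?thesis by simp
qed

lemma Z2_deriv: assumes "t \<ge> 0" shows "(Z2 \<xi> has_real_derivative F2 (Z1 \<xi> t) (Z2 \<xi> t)) (at t)"
proof -
  have w: "((\<lambda>t. \<xi>$1 * sin t + \<xi>$2 * cos t) has_real_derivative (\<xi>$1 * cos t - \<xi>$2 * sin t)) (at t)"
    by (auto intro!: derivative_eq_intros)
  have "(Z2 \<xi> has_real_derivative (rho \<xi> t * (\<xi>$1 * cos t - \<xi>$2 * sin t) + (- RR \<xi> * (rho \<xi> t)^3) * (\<xi>$1 * sin t + \<xi>$2 * cos t))) (at t)"
    unfolding Z2_def[abs_def] using DERIV_mult[OF rho_deriv'[OF assms] w] by (simp add: algebra_simps)
  moreover have "F2 (Z1 \<xi> t) (Z2 \<xi> t) = rho \<xi> t * (\<xi>$1 * cos t - \<xi>$2 * sin t) - ((rho \<xi> t)^2 * RR \<xi>) * (rho \<xi> t * (\<xi>$1 * sin t + \<xi>$2 * cos t))"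
    unfolding F2_def Z_sq by (simp add: Z1_def Z2_def)
  ultimately show ?thesis by (simp only: alg2)
qed

lemma mono_F: "(p-m)*(F1 p q - F1 m n) + (q-n)*(F2 p q - F2 m n) \<le> 0"
proof -
  define P where "P = p^2+q^2"
  define M where "M = m^2+n^2"
  have eq: "(p-m)*(F1 p q - F1 m n) + (q-n)*(F2 p q - F2 m n) = (P+M)*(p*m+q*n) - P^2 - M^2"
  proof -
    have f1: "F1 p q - F1 m n = -(q-n) - (P*p - M*m)" unfolding F1_def P_def M_def by simp
    have f2: "F2 p q - F2 m n = (p-m) - (P*q - M*n)" unfolding F2_def P_def M_def by simp
    have "(p-m)*(-(q-n) - (P*p - M*m)) + (q-n)*((p-m) - (P*q - M*n)) = (P+M)*(p*m+q*n) - P*(p^2+q^2) - M*(m^2+n^2)"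
      by (simp add: algebra_simps power2_eq_square)
    moreover have PP: "p^2+q^2 = P" and MM: "m^2+n^2 = M" by (simp_all add: P_def M_def)
    ultimately show ?thesis unfolding f1 f2 PP MM by (simp add: power2_eq_square)
  qed
  have e2: "(p-m)^2+(q-n)^2 = P + M - 2*(p*m+q*n)" unfolding P_def M_def by (simp add: power2_diff algebra_simps)
  have "0 \<le> P + M - 2*(p*m+q*n)" by (simp only: e2[symmetric]) simp
  then have a: "p*m+q*n \<le> (P+M)/2" by simp
  have b: "(P+M)*(p*m+q*n) \<le> (P+M)*((P+M)/2)" by (rule mult_left_mono[OF a]) (simp add: P_def M_def)
  have e3: "(P-M)^2 = P^2+M^2 - 2*P*M" by (rule power2_diff)
  have e4: "(P+M)*((P+M)/2) = (P^2+M^2+2*P*M)/2" by (simp add: power2_eq_square algebra_simps add_divide_distrib)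
  have "0 \<le> P^2+M^2 - 2*P*M" by (simp only: e3[symmetric]) simp
  then have c: "(P+M)*((P+M)/2) \<le> P^2+M^2" unfolding e4 by simp
  have "(P+M)*(p*m+q*n) \<le> P^2+M^2" using b c by (rule order_trans)
  then show ?thesis unfolding eq by simp
qed


definition fex :: "real^3 \<Rightarrow> real \<Rightarrow> real^3" where
  "fex x u = (\<chi> i. if i = 1 then F1 (x$1) (x$2) else if i = 2 then F2 (x$1) (x$2) else u * max (-(x$1)) 0)"

definition hex :: "real^3 \<Rightarrow> real" where "hex x = (x$3)\<^sup>2 * max (x$1) 0"

definition A :: "(real \<Rightarrow> real) \<Rightarrow> real^3 \<Rightarrow> real \<Rightarrow> real" where
  "A u \<xi> t = \<xi>$3 + integral {0..t} (\<lambda>s. u s * max (- Z1 \<xi> s) 0)"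

definition sol :: "(real \<Rightarrow> real) \<Rightarrow> real^3 \<Rightarrow> real \<Rightarrow> real^3" where
  "sol u \<xi> t = (\<chi> i. if i = 1 then Z1 \<xi> t else if i = 2 then Z2 \<xi> t else A u \<xi> t)"

lemma fex_nth [simp]: "fex x u $ 1 = F1 (x$1) (x$2)" "fex x u $ 2 = F2 (x$1) (x$2)"
  "fex x u $ 3 = u * max (-(x$1)) 0"
  by (simp_all add: fex_def)

lemma sol_nth [simp]: "sol u \<xi> t $ 1 = Z1 \<xi> t" "sol u \<xi> t $ 2 = Z2 \<xi> t" "sol u \<xi> t $ 3 = A u \<xi> t"
  by (simp_all add: sol_def)

lemma vec3_eq: "(x::real^3) = y \<longleftrightarrow> x$1 = y$1 \<and> x$2 = y$2 \<and> x$3 = y$3"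
  by (simp add: vec_eq_iff forall_3)

lemma has_integral_vec3:
  fixes f :: "real \<Rightarrow> real^3"
  assumes "\<And>i. ((\<lambda>s. f s $ i) has_integral (y $ i)) S"
  shows "(f has_integral y) S"
proof (rule has_integral_componentwise)
  fix b :: "real^3" assume "b \<in> Basis"
  then obtain i where "b = axis i 1" by (auto simp: Basis_vec_def)
  then show "((\<lambda>x. f x \<bullet> b) has_integral (y \<bullet> b)) S" using assms[of i] by (simp add: inner_axis)
qed

lemma has_integral_nth:
  fixes f :: "real \<Rightarrow> real^3"
  assumes "(f has_integral y) S"
  shows "((\<lambda>s. f s $ i) has_integral (y $ i)) S"
  using has_integral_linear[OF assms bounded_linear_vec_nth[of i]] by (simp add: o_def)

lemma adm_integrable:
  fixes u :: "real \<Rightarrow> real"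
  assumes u: "admissible_input u" and c: "continuous_on {0..t} c"
  shows "(\<lambda>s. u s * c s) integrable_on {0..t}"
proof (cases "0 \<le> t")
  case False
  then have "{0..t} = {}" by auto
  then show ?thesis by (simp add: integrable_on_empty)
next
  case True
  from u True obtain B where B: "AE s in lborel. s \<in> {0..t} \<longrightarrow> norm (u s) \<le> B"
    unfolding admissible_input_def by blast
  have "compact (c ` {0..t})" by (rule compact_continuous_image[OF c]) auto
  then obtain C where C: "\<forall>y\<in>c ` {0..t}. norm y \<le> C" using compact_imp_bounded bounded_iff by metis
  have mu: "(\<lambda>s. indicator {0..} s *\<^sub>R u s) \<in> borel_measurable lborel"
    using u borel_measurable_restrict_space_iff[of "{0..}" lborel u] by (simp add: admissible_input_def)
  have mc: "(\<lambda>s. indicator {0..t} s *\<^sub>R c s) \<in> borel_measurable borel"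
    by (rule borel_measurable_continuous_on_indicator[OF _ c]) auto
  have geq: "(\<lambda>s. indicator {0..t} s *\<^sub>R (u s * c s)) = (\<lambda>s. (indicator {0..} s *\<^sub>R u s) * (indicator {0..t} s *\<^sub>R c s))"
    by (auto simp: indicator_def)
  have mg: "(\<lambda>s. indicator {0..t} s *\<^sub>R (u s * c s)) \<in> borel_measurable lborel"
    unfolding geq using mu mc by (simp add: measurable_lborel1)
  have ib: "integrable lborel (\<lambda>s. indicator {0..t} s *\<^sub>R (B * C))"
    by (rule integrable_indicator) (auto simp: emeasure_lborel_Icc_eq)
  have "integrable lborel (\<lambda>s. indicator {0..t} s *\<^sub>R (u s * c s))"
  proof (rule Bochner_Integration.integrable_bound[OF ib mg])
    show "AE x in lborel. norm (indicator {0..t} x *\<^sub>R (u x * c x)) \<le> norm (indicator {0..t} x *\<^sub>R (B * C))"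
      using B
    proof eventually_elim
      case (elim s)
      show ?case
      proof (cases "s \<in> {0..t}")
        case True
        then have "\<bar>u s\<bar> \<le> B" "\<bar>c s\<bar> \<le> C" using elim C by auto
        then have "\<bar>u s * c s\<bar> \<le> B * C" by (simp add: abs_mult mult_mono')
        then show ?thesis using True by simp
      qed simp
    qed
  qed
  then have "set_integrable lborel {0..t} (\<lambda>s. u s * c s)" by (simp add: set_integrable_def)
  then show ?thesis by (rule set_borel_integral_eq_integral(1))
qed

lemma Z_init: "Z1 \<xi> 0 = \<xi>$1" "Z2 \<xi> 0 = \<xi>$2" by (simp_all add: Z1_def Z2_def rho_def)

lemma sol_init: "sol u \<xi> 0 = \<xi>"
  by (simp add: vec3_eq Z_init A_def)

lemma cont_glue:
  fixes f :: "real \<Rightarrow> 'a::topological_space"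
  assumes "\<And>N. N \<ge> 0 \<Longrightarrow> continuous_on {0..N} f"
  shows "continuous_on {0..} f"
  unfolding continuous_on_eq_continuous_within
proof
  fix t0 :: real assume "t0 \<in> {0..}"
  then have t0: "t0 \<ge> 0" by simp
  have "continuous_on {0..t0+1} f" using assms t0 by simp
  then have c: "continuous (at t0 within {0..t0+1}) f"
    using t0 by (simp add: continuous_on_eq_continuous_within)
  have "at t0 within {0..} = at t0 within {0..t0+1}"
    by (rule at_within_nhd[of _ "{..<t0+1}"]) (use t0 in auto)
  then show "continuous (at t0 within {0..}) f" using c by simp
qed

lemma Z1_cont: "continuous_on {0..} (Z1 \<xi>)"
  by (rule continuous_at_imp_continuous_on) (auto intro: DERIV_isCont[OF Z1_deriv])
lemma Z2_cont: "continuous_on {0..} (Z2 \<xi>)"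
  by (rule continuous_at_imp_continuous_on) (auto intro: DERIV_isCont[OF Z2_deriv])

lemma A_cont:
  assumes u: "admissible_input u"
  shows "continuous_on {0..} (A u \<xi>)"
proof -
  have "continuous_on {0..N} (\<lambda>t. integral {0..t} (\<lambda>s. u s * max (- Z1 \<xi> s) 0))" if "N \<ge> 0" for N
  proof (rule indefinite_integral_continuous_1, rule adm_integrable[OF u])
    show "continuous_on {0..N} (\<lambda>s. max (- Z1 \<xi> s) 0)"
      by (intro continuous_intros continuous_on_subset[OF Z1_cont]) auto
  qed
  then have "continuous_on {0..} (\<lambda>t. integral {0..t} (\<lambda>s. u s * max (- Z1 \<xi> s) 0))"
    by (rule cont_glue)
  then show ?thesis unfolding A_def[abs_def] by (intro continuous_intros)
qed

lemma sol_cont: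
  assumes u: "admissible_input u"
  shows "continuous_on {0..} (sol u \<xi>)"
  unfolding sol_def
proof (intro continuous_on_vec_lambda)
  fix i :: 3
  show "continuous_on {0..} (\<lambda>t. if i = 1 then Z1 \<xi> t else if i = 2 then Z2 \<xi> t else A u \<xi> t)"
    using Z1_cont Z2_cont A_cont[OF u] by (cases "i = 1"; cases "i = 2") auto
qed

lemma Z1_vd: "t \<ge> 0 \<Longrightarrow> (Z1 \<xi> has_vector_derivative F1 (Z1 \<xi> t) (Z2 \<xi> t)) (at t within S)"
  using Z1_deriv has_real_derivative_iff_has_vector_derivative has_vector_derivative_at_within by blast
lemma Z2_vd: "t \<ge> 0 \<Longrightarrow> (Z2 \<xi> has_vector_derivative F2 (Z1 \<xi> t) (Z2 \<xi> t)) (at t within S)"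
  using Z2_deriv has_real_derivative_iff_has_vector_derivative has_vector_derivative_at_within by blast

lemma sol_exists:
  assumes u: "admissible_input u"
  shows "is_solution_on fex u \<xi> \<infinity> (sol u \<xi>)"
proof -
  have set: "{t. 0 \<le> t \<and> ereal t < \<infinity>} = {0..}" by auto
  have "((\<lambda>s. fex (sol u \<xi> s) (u s)) has_integral (sol u \<xi> t - \<xi>)) {0..t}" if t: "0 \<le> t" for t
  proof (rule has_integral_vec3)
    fix i :: 3
    have i: "i = 1 \<or> i = 2 \<or> i = 3" using exhaust_3 by blast
    have h1: "((\<lambda>s. F1 (Z1 \<xi> s) (Z2 \<xi> s)) has_integral (Z1 \<xi> t - Z1 \<xi> 0)) {0..t}"
      by (rule fundamental_theorem_of_calculus[OF t]) (auto intro: Z1_vd)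
    have h2: "((\<lambda>s. F2 (Z1 \<xi> s) (Z2 \<xi> s)) has_integral (Z2 \<xi> t - Z2 \<xi> 0)) {0..t}"
      by (rule fundamental_theorem_of_calculus[OF t]) (auto intro: Z2_vd)
    have "(\<lambda>s. u s * max (- Z1 \<xi> s) 0) integrable_on {0..t}"
    proof (rule adm_integrable[OF u])
      show "continuous_on {0..t} (\<lambda>s. max (- Z1 \<xi> s) 0)"
        by (intro continuous_intros continuous_on_subset[OF Z1_cont]) auto
    qed
    then have h3: "((\<lambda>s. u s * max (- Z1 \<xi> s) 0) has_integral (A u \<xi> t - \<xi>$3)) {0..t}"
      unfolding A_def by (simp add: integrable_integral)
    show "((\<lambda>s. fex (sol u \<xi> s) (u s) $ i) has_integral (sol u \<xi> t - \<xi>) $ i) {0..t}"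
      using i h1 h2 h3 by (auto simp: Z_init)
  qed
  then show ?thesis
    unfolding is_solution_on_def set using sol_init sol_cont[OF u] by auto
qed

lemma sol_sub:
  assumes "ereal t < T" "s \<in> {0..t}"
  shows "0 \<le> s \<and> ereal s < T"
proof -
  have st: "ereal s \<le> ereal t" using assms by simp
  show ?thesis using assms(2) le_less_trans[OF st assms(1)] by simp
qed

lemma comp_deriv:
  fixes p :: "real \<Rightarrow> real"
  assumes Fc: "continuous_on {0..t} F"
    and pint: "\<And>s. s \<in> {0..t} \<Longrightarrow> p s = c + integral {0..s} F"
    and s: "s \<in> {0..t}"
  shows "(p has_real_derivative F s) (at s within {0..t})"
proof -
  have "((\<lambda>s. integral {0..s} F) has_vector_derivative F s) (at s within {0..t})"
    by (rule integral_has_vector_derivative[OF Fc s])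
  then have "((\<lambda>s. integral {0..s} F) has_real_derivative F s) (at s within {0..t})"
    by (simp add: has_real_derivative_iff_has_vector_derivative)
  then have "((\<lambda>s. c + integral {0..s} F) has_real_derivative (0 + F s)) (at s within {0..t})"
    by (intro DERIV_add) auto
  then have "((\<lambda>s. c + integral {0..s} F) has_real_derivative F s) (at s within {0..t})" by simp
  then show ?thesis
    by (rule has_field_derivative_transform_within[where d=1]) (use s pint in auto)
qed

lemma zuniq:
  assumes sl: "is_solution_on fex u \<xi> T x" and t: "0 \<le> t" "ereal t < T"
  shows "x t $ 1 = Z1 \<xi> t \<and> x t $ 2 = Z2 \<xi> t"
proof -
  have x0: "x 0 = \<xi>" using sl by (simp add: is_solution_on_def)
  have xc: "continuous_on {0..t} x"
    using sl unfolding is_solution_on_def by (rule conjE[OF conjunct2]) (auto elim: continuous_on_subset dest: sol_sub[OF t(2)])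
  have xi: "((\<lambda>r. fex (x r) (u r)) has_integral (x s - \<xi>)) {0..s}" if "s \<in> {0..t}" for s
    using sl sol_sub[OF t(2) that] by (simp add: is_solution_on_def)
  define p where "p = (\<lambda>s. x s $ 1)"
  define q where "q = (\<lambda>s. x s $ 2)"
  have pc: "continuous_on {0..t} p" "continuous_on {0..t} q"
    unfolding p_def q_def by (auto intro: continuous_on_component xc)
  have F1c: "continuous_on {0..t} (\<lambda>r. F1 (p r) (q r))"
    unfolding F1_def by (intro continuous_intros pc)
  have F2c: "continuous_on {0..t} (\<lambda>r. F2 (p r) (q r))"
    unfolding F2_def by (intro continuous_intros pc)
  have pint: "p s = \<xi>$1 + integral {0..s} (\<lambda>r. F1 (p r) (q r))" if "s \<in> {0..t}" for s
    using integral_unique[OF has_integral_nth[OF xi[OF that], of 1]] by (simp add: p_def q_def)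
  have qint: "q s = \<xi>$2 + integral {0..s} (\<lambda>r. F2 (p r) (q r))" if "s \<in> {0..t}" for s
    using integral_unique[OF has_integral_nth[OF xi[OF that], of 2]] by (simp add: p_def q_def)
  define E where "E = (\<lambda>s. (p s - Z1 \<xi> s)^2 + (q s - Z2 \<xi> s)^2)"
  define D where "D = (\<lambda>s. 2 * ((p s - Z1 \<xi> s) * (F1 (p s) (q s) - F1 (Z1 \<xi> s) (Z2 \<xi> s)) + (q s - Z2 \<xi> s) * (F2 (p s) (q s) - F2 (Z1 \<xi> s) (Z2 \<xi> s))))"
  have dE: "(E has_real_derivative D s) (at s within {0..t})" if s: "s \<in> {0..t}" for s
  proof -
    have dp: "(p has_real_derivative F1 (p s) (q s)) (at s within {0..t})"
      by (rule comp_deriv[OF F1c pint s])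
    have dq: "(q has_real_derivative F2 (p s) (q s)) (at s within {0..t})"
      by (rule comp_deriv[OF F2c qint s])
    have dz1: "(Z1 \<xi> has_real_derivative F1 (Z1 \<xi> s) (Z2 \<xi> s)) (at s within {0..t})"
      using Z1_deriv[of s \<xi>] s by (auto intro: has_field_derivative_at_within)
    have dz2: "(Z2 \<xi> has_real_derivative F2 (Z1 \<xi> s) (Z2 \<xi> s)) (at s within {0..t})"
      using Z2_deriv[of s \<xi>] s by (auto intro: has_field_derivative_at_within)
    have d1: "((\<lambda>s. p s - Z1 \<xi> s) has_real_derivative (F1 (p s) (q s) - F1 (Z1 \<xi> s) (Z2 \<xi> s))) (at s within {0..t})"
      by (rule DERIV_diff[OF dp dz1])
    have d2: "((\<lambda>s. q s - Z2 \<xi> s) has_real_derivative (F2 (p s) (q s) - F2 (Z1 \<xi> s) (Z2 \<xi> s))) (at s within {0..t})"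
      by (rule DERIV_diff[OF dq dz2])
    have "((\<lambda>s. (p s - Z1 \<xi> s) * (p s - Z1 \<xi> s) + (q s - Z2 \<xi> s) * (q s - Z2 \<xi> s)) has_real_derivative
      ((p s - Z1 \<xi> s) * (F1 (p s) (q s) - F1 (Z1 \<xi> s) (Z2 \<xi> s)) + (F1 (p s) (q s) - F1 (Z1 \<xi> s) (Z2 \<xi> s)) * (p s - Z1 \<xi> s)
      + ((q s - Z2 \<xi> s) * (F2 (p s) (q s) - F2 (Z1 \<xi> s) (Z2 \<xi> s)) + (F2 (p s) (q s) - F2 (Z1 \<xi> s) (Z2 \<xi> s)) * (q s - Z2 \<xi> s)))) (at s within {0..t})"
      by (intro DERIV_add DERIV_mult' d1 d2)
    then show ?thesis unfolding E_def D_def power2_eq_square by (simp add: algebra_simps)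
  qed
  have Dn: "D s \<le> 0" for s
    unfolding D_def using mono_F[of "p s" "Z1 \<xi> s" "q s" "Z2 \<xi> s"] by simp
  have dE': "(E has_derivative (\<lambda>h. h * D s)) (at s within {0..t})" if "s \<in> {0..t}" for s
    using dE[OF that] unfolding has_field_derivative_def
    by (rule has_derivative_eq_rhs) (auto simp: fun_eq_iff)
  obtain y where "y \<in> {0..t}" "E t - E 0 = (t - 0) * D y"
    using mvt_very_simple[OF t(1), of E "\<lambda>s h. h * D s"] dE' by auto
  moreover have "E 0 = 0" unfolding E_def p_def q_def using x0 by (simp add: Z_init)
  moreover have "t * D y \<le> 0" by (rule mult_nonneg_nonpos[OF t(1) Dn])
  ultimately have "E t \<le> 0" by simp
  moreover have "E t \<ge> 0" unfolding E_def by simp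
  ultimately have "E t = 0" by simp
  then have "(p t - Z1 \<xi> t)^2 = 0 \<and> (q t - Z2 \<xi> t)^2 = 0" unfolding E_def
    by (simp add: add_nonneg_eq_0_iff)
  then show ?thesis by (simp add: p_def q_def)
qed

lemma uniq:
  assumes sl: "is_solution_on fex u \<xi> T x" and t: "0 \<le> t" "ereal t < T"
  shows "x t = sol u \<xi> t"
proof -
  have z: "x s $ 1 = Z1 \<xi> s" "x s $ 2 = Z2 \<xi> s" if "s \<in> {0..t}" for s
    using zuniq[OF sl] sol_sub[OF t(2) that] by auto
  have xi: "((\<lambda>r. fex (x r) (u r)) has_integral (x t - \<xi>)) {0..t}"
    using sl t by (simp add: is_solution_on_def)
  have "((\<lambda>r. u r * max (- (x r $ 1)) 0) has_integral (x t $ 3 - \<xi> $ 3)) {0..t}"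
    using has_integral_nth[OF xi, of 3] by simp
  then have "((\<lambda>r. u r * max (- Z1 \<xi> r) 0) has_integral (x t $ 3 - \<xi> $ 3)) {0..t}"
    by (rule has_integral_eq[rotated]) (simp add: z)
  then have "x t $ 3 = A u \<xi> t" unfolding A_def by (simp add: integral_unique)
  then show ?thesis using z[of t] t by (simp add: vec3_eq)
qed

lemma adm_const: "admissible_input (\<lambda>_. c::real)"
  unfolding admissible_input_def
proof (intro conjI allI impI)
  show "(\<lambda>_. c) \<in> borel_measurable (restrict_space lborel {0..})" by simp
  fix T :: real assume "0 \<le> T"
  show "\<exists>B. AE t in lborel. t \<in> {0..T} \<longrightarrow> norm c \<le> B" by (rule exI[of _ "norm c"]) simp
qed

lemma fc:
  assumes "\<And>u. Adm u \<Longrightarrow> admissible_input u"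
  shows "forward_complete_wrt Adm fex"
  unfolding forward_complete_wrt_def
proof (intro allI impI conjI)
  fix u \<xi> assume "Adm u"
  then have u: "admissible_input u" by (rule assms)
  show "\<exists>x. is_solution_on fex u \<xi> \<infinity> x" using sol_exists[OF u] by blast
next
  fix u \<xi> T x assume "Adm u" and sl: "is_solution_on fex u \<xi> T x"
  then have u: "admissible_input u" by (intro assms)
  show "\<exists>x'. is_solution_on fex u \<xi> \<infinity> x' \<and> (\<forall>t. 0 \<le> t \<and> ereal t < T \<longrightarrow> x' t = x t)"
    using sol_exists[OF u] uniq[OF sl] by metis
qed

lemma fex_fc: "forward_complete fex"
  unfolding forward_complete_def by (rule fc)

lemma fcl_eq: "(\<lambda>x d. fex x (norm (hex x) *\<^sub>R d)) = (\<lambda>x d. fex x 0)"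
proof (intro ext)
  fix x :: "real^3" and d :: real
  have "norm (hex x) * d * max (- x $ 1) 0 = 0"
    by (cases "x$1 \<ge> 0") (auto simp: hex_def)
  then show "fex x (norm (hex x) *\<^sub>R d) = fex x 0" by (simp add: vec3_eq)
qed

lemma fcl_sol: "is_solution_on (\<lambda>x d. fex x 0) d \<xi> T x = is_solution_on fex (\<lambda>_. 0) \<xi> T x"
  by (simp add: is_solution_on_def)

lemma fcl_fc: "forward_complete_wrt admissible_dist (\<lambda>x d. fex x 0)"
  using fex_fc adm_const[of 0] unfolding forward_complete_def forward_complete_wrt_def fcl_sol by blast

lemma norm_sq3: "(norm (\<xi>::real^3))^2 = (\<xi>$1)^2 + (\<xi>$2)^2 + (\<xi>$3)^2"
  unfolding power2_norm_eq_inner inner_vec_def sum_3 by (simp add: power2_eq_square)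

lemma frac_mono:
  fixes a b t :: real
  assumes "0 \<le> a" "a \<le> b" "0 \<le> t"
  shows "a / (1 + 2 * a * t) \<le> b / (1 + 2 * b * t)"
proof -
  have pa: "1 + 2 * a * t > 0" using assms by (simp add: add_pos_nonneg)
  have pb: "1 + 2 * b * t > 0" using assms by (simp add: add_pos_nonneg)
  have "a * (1 + 2 * b * t) \<le> b * (1 + 2 * a * t)" using assms by (simp add: algebra_simps)
  then show ?thesis using pa pb by (simp add: divide_simps)
qed

lemma gform:
  fixes s t :: real
  assumes "0 \<le> s" "0 \<le> t"
  shows "s / sqrt (1 + 2 * s^2 * t) = sqrt (s^2 / (1 + 2 * s^2 * t))"
  using assms by (simp add: real_sqrt_divide)

lemma Z1_bound:
  assumes t: "0 \<le> t"
  shows "\<bar>Z1 \<xi> t\<bar> \<le> norm \<xi> / sqrt (1 + 2 * (norm \<xi>)^2 * t)"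
proof -
  have R0: "0 \<le> RR \<xi>" by (rule RR_nonneg)
  have RN: "RR \<xi> \<le> (norm \<xi>)^2" unfolding norm_sq3 RR_def by simp
  have p: "1 + 2 * RR \<xi> * t > 0" using R0 t by (simp add: add_pos_nonneg)
  have r2: "(rho \<xi> t)^2 = 1 / (1 + 2 * RR \<xi> * t)"
    unfolding rho_def using p by (simp add: power_divide)
  have "(Z1 \<xi> t)^2 \<le> (Z1 \<xi> t)^2 + (Z2 \<xi> t)^2" by simp
  also have "\<dots> = RR \<xi> / (1 + 2 * RR \<xi> * t)" unfolding Z_sq r2 by simp
  also have "\<dots> \<le> (norm \<xi>)^2 / (1 + 2 * (norm \<xi>)^2 * t)" by (rule frac_mono[OF R0 RN t])
  finally have "sqrt ((Z1 \<xi> t)^2) \<le> sqrt ((norm \<xi>)^2 / (1 + 2 * (norm \<xi>)^2 * t))"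
    by (rule real_sqrt_le_mono)
  then show ?thesis using gform[of "norm \<xi>" t] t by simp
qed

lemma pos1: "0 \<le> t \<Longrightarrow> 0 < 1 + 2 * x^2 * (t::real)" by (simp add: add_pos_nonneg)

lemma possq: "0 \<le> t \<Longrightarrow> sqrt (1 + 2 * x^2 * (t::real)) \<noteq> 0" using pos1[of t x] by simp

definition beta :: "real \<Rightarrow> real \<Rightarrow> real" where
  "beta s t = s^2 * (s / sqrt (1 + 2 * s^2 * t))"

lemma g_mono:
  fixes a b t :: real
  assumes "0 \<le> a" "a \<le> b" "0 \<le> t"
  shows "a / sqrt (1 + 2 * a^2 * t) \<le> b / sqrt (1 + 2 * b^2 * t)"
proof -
  have "a^2 \<le> b^2" using assms by (simp add: power_mono)
  then have "a^2 / (1 + 2 * a^2 * t) \<le> b^2 / (1 + 2 * b^2 * t)" using assms by (intro frac_mono) auto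
  then show ?thesis using assms gform[of a t] gform[of b t] by (simp add: real_sqrt_le_mono)
qed

lemma beta_KL: "class_KL beta"
  unfolding class_KL_def class_K_def
proof (intro conjI allI impI)
  fix t :: real assume t: "0 \<le> t"
  show "continuous_on {0..} (\<lambda>s. beta s t)"
    unfolding beta_def
    by (intro continuous_intros) (use possq[OF t] in auto)
  show "strict_mono_on {0..} (\<lambda>s. beta s t)"
  proof (rule strict_mono_onI)
    fix a b :: real assume ab: "a \<in> {0..}" "b \<in> {0..}" "a < b"
    have g: "a / sqrt (1 + 2 * a^2 * t) \<le> b / sqrt (1 + 2 * b^2 * t)" using ab t by (intro g_mono) auto
    have gp: "b / sqrt (1 + 2 * b^2 * t) > 0" using ab t by (auto intro!: divide_pos_pos simp: add_pos_nonneg)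
    have "a^2 < b^2" using ab by (simp add: power_strict_mono)
    have "beta a t \<le> a^2 * (b / sqrt (1 + 2 * b^2 * t))" unfolding beta_def by (rule mult_left_mono[OF g]) simp
    also have "\<dots> < b^2 * (b / sqrt (1 + 2 * b^2 * t))" by (rule mult_strict_right_mono[OF \<open>a^2 < b^2\<close> gp])
    finally show "beta a t < beta b t" unfolding beta_def .
  qed
  show "beta 0 t = 0" by (simp add: beta_def)
  show "0 \<le> beta s t" if "0 \<le> s" for s using that t by (simp add: beta_def)
next
  fix s :: real assume s: "0 \<le> s"
  show "antimono_on {0..} (beta s)"
  proof (rule monotone_onI)
    fix t1 t2 :: real assume tt: "t1 \<in> {0..}" "t2 \<in> {0..}" "t1 \<le> t2"
    have p1: "sqrt (1 + 2 * s^2 * t1) > 0" using tt by (simp add: add_pos_nonneg)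
    have le: "sqrt (1 + 2 * s^2 * t1) \<le> sqrt (1 + 2 * s^2 * t2)" using tt by (simp add: mult_left_mono)
    have "s / sqrt (1 + 2 * s^2 * t2) \<le> s / sqrt (1 + 2 * s^2 * t1)"
      by (rule divide_left_mono[OF le s]) (use p1 le in simp)
    then show "beta s t2 \<le> beta s t1" unfolding beta_def by (rule mult_left_mono) simp
  qed
  show "(beta s \<longlongrightarrow> 0) at_top"
  proof (cases "s = 0")
    case True
    then show ?thesis by (simp add: beta_def[abs_def])
  next
    case False
    then have sp: "0 < 2 * s^2" by simp
    have "LIM t at_top. 1 + 2 * s^2 * t :> at_top"
      by (rule filterlim_tendsto_add_at_top[OF tendsto_const filterlim_tendsto_pos_mult_at_top[OF tendsto_const sp filterlim_ident]])
    then have "LIM t at_top. sqrt (1 + 2 * s^2 * t) :> at_infinity"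
      by (intro filterlim_at_top_imp_at_infinity filterlim_compose[OF sqrt_at_top])
    then have "((\<lambda>t. s / sqrt (1 + 2 * s^2 * t)) \<longlongrightarrow> 0) at_top"
      by (rule tendsto_divide_0[OF tendsto_const])
    then show ?thesis unfolding beta_def[abs_def] by (rule tendsto_mult_right_zero)
  qed
qed

lemma id_Kinf: "class_Kinf (\<lambda>s. s)"
  unfolding class_Kinf_def class_K_def
proof (intro conjI allI)
  show "continuous_on {0..} (\<lambda>s::real. s)" by (intro continuous_intros)
  show "strict_mono_on {0..} (\<lambda>s::real. s)" by (rule strict_mono_onI) auto
  fix M :: real
  show "\<exists>s\<ge>0. M < s" by (rule exI[of _ "max 0 M + 1"]) auto
qed auto

lemma id_smooth: "smooth_nonneg (\<lambda>s. s)"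
proof -
  define D where "D = (\<lambda>k::nat. if k = 0 then (\<lambda>s::real. s) else if k = 1 then (\<lambda>s. 1) else (\<lambda>s. 0))"
  have "D 0 = (\<lambda>s. s)" by (simp add: D_def)
  moreover have "(D k has_real_derivative D (Suc k) s) (at s within {0..})" for k s
    unfolding D_def by (cases "k = 0"; cases "k = 1") (auto intro!: derivative_eq_intros)
  ultimately show ?thesis unfolding smooth_nonneg_def by blast
qed

lemma ROS_ex: "ROS fex hex"
  unfolding ROS_def Let_def
proof (intro conjI exI)
  show "forward_complete fex" by (rule fex_fc)
  show "class_Kinf (\<lambda>s. s)" by (rule id_Kinf)
  show "smooth_nonneg (\<lambda>s. s)" by (rule id_smooth)
  show "forward_complete_wrt admissible_dist (\<lambda>x d. fex x (norm (hex x) *\<^sub>R d))"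
    unfolding fcl_eq by (rule fcl_fc)
  show "class_KL beta" by (rule beta_KL)
  show "\<forall>d \<xi> x t. admissible_dist d \<longrightarrow> is_solution_on (\<lambda>x d. fex x (norm (hex x) *\<^sub>R d)) d \<xi> \<infinity> x \<longrightarrow>
         0 \<le> t \<longrightarrow> norm (hex (x t)) \<le> beta (norm \<xi>) t"
  proof (intro allI impI)
    fix d \<xi> x and t :: real
    assume s0: "is_solution_on (\<lambda>x d. fex x (norm (hex x) *\<^sub>R d)) d \<xi> \<infinity> x" and t: "0 \<le> t"
    have sl: "is_solution_on fex (\<lambda>_. 0) \<xi> \<infinity> x" using s0 unfolding fcl_eq fcl_sol .
    have xt: "x t = sol (\<lambda>_. 0) \<xi> t" by (rule uniq[OF sl t]) simp
    have A0: "A (\<lambda>_. 0) \<xi> t = \<xi>$3" by (simp add: A_def)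
    have "norm (hex (x t)) = (\<xi>$3)^2 * max (Z1 \<xi> t) 0" by (simp add: xt A0 hex_def)
    also have "\<dots> \<le> (norm \<xi>)^2 * (norm \<xi> / sqrt (1 + 2 * (norm \<xi>)^2 * t))"
    proof (rule mult_mono)
      show "(\<xi>$3)^2 \<le> (norm \<xi>)^2" unfolding norm_sq3 by simp
      show "max (Z1 \<xi> t) 0 \<le> norm \<xi> / sqrt (1 + 2 * (norm \<xi>)^2 * t)"
        using Z1_bound[OF t, of \<xi>] by (simp add: divide_nonneg_pos add_pos_nonneg t)
    qed simp_all
    finally show "norm (hex (x t)) \<le> beta (norm \<xi>) t" unfolding beta_def .
  qed
qed

definition xi0 :: "real^3" where "xi0 = (\<chi> i. if i = 1 then 1 else 0)"

lemma xi0_nth [simp]: "xi0 $ 1 = 1" "xi0 $ 2 = 0" "xi0 $ 3 = 0" by (simp_all add: xi0_def)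

lemma norm_xi0: "norm xi0 = 1"
proof -
  have "(norm xi0)^2 = 1" unfolding norm_sq3 by simp
  then have "sqrt ((norm xi0)^2) = 1" by simp
  then show ?thesis by simp
qed

lemma input_norm_1: "input_norm (\<lambda>_::real. 1::real) = 1"
proof -
  have sp: "space (restrict_space lborel {0::real..}) = {0..}" by (simp add: space_restrict_space)
  have "emeasure (restrict_space lborel {0::real..}) {0..} = emeasure lborel {0::real..}"
    by (rule emeasure_restrict_space) auto
  moreover have "emeasure lborel {0::real..1} \<le> emeasure lborel {0::real..}"
    by (rule emeasure_mono) auto
  ultimately have "emeasure (restrict_space lborel {0::real..}) (space (restrict_space lborel {0::real..})) \<noteq> 0"
    unfolding sp by auto
  from esssup_const[OF this, of "ereal 1"] show ?thesis unfolding input_norm_def by simp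
qed

lemma Z1_xi0: "Z1 xi0 s = cos s / sqrt (1 + 2 * s)"
  by (simp add: Z1_def rho_def RR_def)

lemma ptw:
  assumes s: "0 \<le> s" "s \<le> T"
  shows "((cos s)^2 - cos s) / (2 * sqrt (1 + 2 * T)) \<le> max (- (cos s / sqrt (1 + 2 * s))) 0"
proof (cases "cos s \<ge> 0")
  case True
  have "(cos s)^2 - cos s = cos s * (cos s - 1)" by (simp add: power2_eq_square algebra_simps)
  also have "\<dots> \<le> 0" using True cos_le_one[of s] by (simp add: mult_nonneg_nonpos)
  finally have "((cos s)^2 - cos s) / (2 * sqrt (1 + 2 * T)) \<le> 0"
    using s by (simp add: divide_nonpos_pos)
  then show ?thesis by simp
next
  case False
  let ?c = "cos s"
  have S0: "0 < sqrt (1 + 2 * s)" using s by simp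
  have Sle: "sqrt (1 + 2 * s) \<le> sqrt (1 + 2 * T)" using s by simp
  have "- ?c / sqrt (1 + 2 * T) \<le> - ?c / sqrt (1 + 2 * s)"
    by (rule divide_left_mono[OF Sle]) (use False S0 Sle in auto)
  moreover have "(?c^2 - ?c) / (2 * sqrt (1 + 2 * T)) \<le> - ?c / sqrt (1 + 2 * T)"
  proof -
    have m1: "0 \<le> ?c + 1" using cos_ge_minus_one[of s] by linarith
    have "?c * (?c + 1) \<le> 0" by (intro mult_nonpos_nonneg) (use False m1 in auto)
    then have "?c^2 - ?c \<le> - 2 * ?c" by (simp add: power2_eq_square algebra_simps)
    then have "(?c^2 - ?c) / (2 * sqrt (1 + 2 * T)) \<le> (- 2 * ?c) / (2 * sqrt (1 + 2 * T))"
      using s by (intro divide_right_mono) auto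
    then show ?thesis by simp
  qed
  ultimately show ?thesis by simp
qed

lemma A_lower:
  assumes T: "0 \<le> T" and sT: "sin T = 0"
  shows "(T / 4) / sqrt (1 + 2 * T) \<le> A (\<lambda>_. 1) xi0 T"
proof -
  define S where "S = sqrt (1 + 2 * T)"
  have S0: "0 < S" using T by (simp add: S_def)
  define g where "g = (\<lambda>s. ((cos s)^2 - cos s) / (2 * S))"
  define G where "G = (\<lambda>s. (s / 4 + sin (2 * s) / 8 - sin s / 2) / S)"
  have dG: "(G has_real_derivative g s) (at s)" for s
  proof -
    have "((\<lambda>s. s / 4 + sin (2 * s) / 8 - sin s / 2) has_real_derivative (1 / 4 + cos (2 * s) * 2 / 8 - cos s / 2)) (at s)"
      by (auto intro!: derivative_eq_intros)
    then have "(G has_real_derivative ((1 / 4 + cos (2 * s) * 2 / 8 - cos s / 2) / S)) (at s)"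
      unfolding G_def by (rule DERIV_cdivide)
    moreover have "(1 / 4 + cos (2 * s) * 2 / 8 - cos s / 2) / S = g s"
    proof -
      have "S \<noteq> 0" using S0 by simp
      then show ?thesis unfolding g_def cos_double_cos by (simp add: field_simps)
    qed
    ultimately show ?thesis by simp
  qed
  have gi: "(g has_integral (G T - G 0)) {0..T}"
    by (rule fundamental_theorem_of_calculus[OF T])
       (simp add: has_real_derivative_iff_has_vector_derivative[symmetric] has_field_derivative_at_within[OF dG])
  have GT: "G T - G 0 = (T / 4) / S" unfolding G_def using sT by (simp add: sin_double)
  have fi: "(\<lambda>s. 1 * max (- Z1 xi0 s) 0) integrable_on {0..T}"
    by (intro integrable_continuous_interval continuous_intros continuous_on_subset[OF Z1_cont]) auto
  have "integral {0..T} g \<le> integral {0..T} (\<lambda>s. 1 * max (- Z1 xi0 s) 0)"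
  proof (rule integral_le)
    show "g integrable_on {0..T}" using gi by blast
    show "(\<lambda>s. 1 * max (- Z1 xi0 s) 0) integrable_on {0..T}" by (rule fi)
    fix s assume "s \<in> {0..T}"
    then show "g s \<le> 1 * max (- Z1 xi0 s) 0" unfolding g_def S_def Z1_xi0 using ptw[of s T] by simp
  qed
  moreover have "integral {0..T} g = (T / 4) / S" using gi GT by (simp add: integral_unique)
  ultimately show ?thesis unfolding A_def S_def by simp
qed

lemma arith_lb:
  fixes k S A :: real
  assumes k: "1 \<le> k" and S: "0 < S" "S \<le> 5 * k" and A: "(k^2 * pi / 2) / S \<le> A"
  shows "k / 125 \<le> A^2 * (1 / S)"
proof -
  have L0: "0 \<le> (k^2 * pi / 2) / S" using S k by simp
  have "((k^2 * pi / 2) / S)^2 \<le> A^2" by (rule power_mono[OF A L0])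
  then have "((k^2 * pi / 2) / S)^2 * (1 / S) \<le> A^2 * (1 / S)" using S by (intro mult_right_mono) auto
  moreover have "((k^2 * pi / 2) / S)^2 * (1 / S) = (k^2 * pi / 2)^2 / S^3"
    by (simp add: power_divide power3_eq_cube power2_eq_square)
  moreover have "k^4 \<le> (k^2 * pi / 2)^2"
  proof -
    have "k^2 \<le> k^2 * pi / 2" using pi_ge_two k by (simp add: mult_le_cancel_left1)
    then have "(k^2)^2 \<le> (k^2 * pi / 2)^2" by (rule power_mono) simp
    then show ?thesis by (simp add: power_mult[symmetric])
  qed
  moreover have "S^3 \<le> (5 * k)^3" using S by (intro power_mono) auto
  moreover have "k / 125 = k^4 / (5 * k)^3" using k by (simp add: power_mult_distrib eval_nat_numeral)
  moreover have "k^4 / (5 * k)^3 \<le> k^4 / S^3"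
    using S k \<open>S^3 \<le> (5 * k)^3\<close> by (intro divide_left_mono) auto
  moreover have "k^4 / S^3 \<le> (k^2 * pi / 2)^2 / S^3"
    using S \<open>k^4 \<le> (k^2 * pi / 2)^2\<close> by (intro divide_right_mono) auto
  ultimately show ?thesis by linarith
qed

lemma not_IOS: "\<not> IOS fex hex"
proof
  assume "IOS fex hex"
  then obtain \<beta> \<gamma> where KL: "class_KL \<beta>" and bd: "\<forall>u \<xi> x t. admissible_input u \<longrightarrow> input_norm u < \<infinity> \<longrightarrow>
          is_solution_on fex u \<xi> \<infinity> x \<longrightarrow> t \<ge> 0 \<longrightarrow>
          norm (hex (x t)) \<le> \<beta> (norm \<xi>) t + \<gamma> (real_of_ereal (input_norm u))"
    unfolding IOS_def by blast
  define K where "K = \<beta> 1 0 + \<gamma> 1"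
  have b1: "hex (sol (\<lambda>_. 1) xi0 t) \<le> K" if t: "0 \<le> t" for t
  proof -
    have "norm (hex (sol (\<lambda>_. 1) xi0 t)) \<le> \<beta> (norm xi0) t + \<gamma> (real_of_ereal (input_norm (\<lambda>_::real. 1::real)))"
      by (rule bd[rule_format]) (auto simp: input_norm_1 intro: adm_const sol_exists t)
    then have "norm (hex (sol (\<lambda>_. 1) xi0 t)) \<le> \<beta> 1 t + \<gamma> 1"
      by (simp add: input_norm_1 norm_xi0)
    moreover have "\<beta> 1 t \<le> \<beta> 1 0"
      using KL t unfolding class_KL_def by (auto dest!: spec[of _ 1] intro: monotone_onD)
    ultimately show ?thesis unfolding K_def by simp
  qed
  obtain k :: nat where k: "max 1 (125 * K) < real k" using reals_Archimedean2 by blast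
  define T where "T = 2 * real (k^2) * pi"
  have T0: "0 \<le> T" by (simp add: T_def)
  have sT: "sin T = 0" and cT: "cos T = 1" by (simp_all only: T_def sin_2npi cos_2npi)
  define S where "S = sqrt (1 + 2 * T)"
  have S0: "0 < S" using T0 by (simp add: S_def)
  have Sle: "S \<le> 5 * real k"
  proof -
    have "1 + 2 * T \<le> (5 * real k)^2"
    proof -
      have "1 \<le> (real k)^2" using k by simp
      moreover have "2 * T \<le> 16 * (real k)^2"
      proof -
        have "pi * (real k)^2 \<le> 4 * (real k)^2" by (rule mult_right_mono) (use pi_less_4 in auto)
        moreover have "2 * T = 4 * (pi * (real k)^2)" by (simp add: T_def)
        ultimately show ?thesis by linarith
      qed
      ultimately show ?thesis by (simp add: power_mult_distrib)
    qed
    then have "S \<le> sqrt ((5 * real k)^2)" unfolding S_def by (rule real_sqrt_le_mono)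
    also have "sqrt ((5 * real k)^2) = 5 * real k" by (simp only: real_sqrt_abs)
    finally show ?thesis .
  qed
  have Al: "((real k)^2 * pi / 2) / S \<le> A (\<lambda>_. 1) xi0 T"
    using A_lower[OF T0 sT] unfolding S_def T_def by (simp add: algebra_simps)
  have "real k / 125 \<le> (A (\<lambda>_. 1) xi0 T)^2 * (1 / S)"
    by (rule arith_lb[OF _ S0 Sle Al]) (use k in simp)
  also have "\<dots> = hex (sol (\<lambda>_. 1) xi0 T)"
    unfolding hex_def using S0 by (simp add: Z1_xi0 cT S_def)
  also have "\<dots> \<le> K" by (rule b1[OF T0])
  finally show False using k by simp
qed

definition blip :: "'a::metric_space set \<Rightarrow> ('a \<Rightarrow> real) \<Rightarrow> bool" where
  "blip S f \<longleftrightarrow> (\<exists>L. L-lipschitz_on S f) \<and> (\<exists>M. \<forall>x\<in>S. \<bar>f x\<bar> \<le> M)"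

lemma blip_const: "blip S (\<lambda>x. c)"
  unfolding blip_def by (auto intro: lipschitz_on_constant)

lemma blip_add: "blip S f \<Longrightarrow> blip S g \<Longrightarrow> blip S (\<lambda>x. f x + g x)"
  unfolding blip_def
proof (elim conjE exE, intro conjI exI ballI)
  fix L1 L2 M1 M2 x
  assume l: "L1-lipschitz_on S f" "L2-lipschitz_on S g" and m: "\<forall>x\<in>S. \<bar>f x\<bar> \<le> M1" "\<forall>x\<in>S. \<bar>g x\<bar> \<le> M2"
  show "(L1 + L2)-lipschitz_on S (\<lambda>x. f x + g x)" by (rule lipschitz_on_add[OF l])
  assume "x \<in> S"
  then show "\<bar>f x + g x\<bar> \<le> M1 + M2" using m by (smt (verit))
qed

lemma blip_minus: "blip S f \<Longrightarrow> blip S (\<lambda>x. - f x)"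
  unfolding blip_def by auto

lemma blip_diff: "blip S f \<Longrightarrow> blip S g \<Longrightarrow> blip S (\<lambda>x. f x - g x)"
  using blip_add[of S f "\<lambda>x. - g x"] blip_minus[of S g] by simp

lemma blip_mult: "blip S f \<Longrightarrow> blip S g \<Longrightarrow> blip S (\<lambda>x. f x * g x)"
  unfolding blip_def
proof (elim conjE exE, intro conjI exI ballI)
  fix L1 L2 M1 M2 x
  assume l1: "L1-lipschitz_on S f" and l2: "L2-lipschitz_on S g" and m1: "\<forall>x\<in>S. \<bar>f x\<bar> \<le> M1" and m2: "\<forall>x\<in>S. \<bar>g x\<bar> \<le> M2"
  have L1: "0 \<le> L1" and L2: "0 \<le> L2" using l1 l2 by (auto dest: lipschitz_on_nonneg)
  show "(max M1 0 * L2 + max M2 0 * L1)-lipschitz_on S (\<lambda>x. f x * g x)"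
  proof (rule lipschitz_onI)
    fix x y assume xy: "x \<in> S" "y \<in> S"
    have a: "\<bar>f x\<bar> \<le> max M1 0" "\<bar>g y\<bar> \<le> max M2 0" using xy m1 m2 by force+
    have d1: "\<bar>f x - f y\<bar> \<le> L1 * dist x y" using lipschitz_onD[OF l1 xy] by (simp add: dist_real_def)
    have d2: "\<bar>g x - g y\<bar> \<le> L2 * dist x y" using lipschitz_onD[OF l2 xy] by (simp add: dist_real_def)
    have "\<bar>f x * g x - f y * g y\<bar> = \<bar>f x * (g x - g y) + g y * (f x - f y)\<bar>" by (simp add: algebra_simps)
    also have "\<dots> \<le> \<bar>f x\<bar> * \<bar>g x - g y\<bar> + \<bar>g y\<bar> * \<bar>f x - f y\<bar>" by (simp add: abs_mult abs_triangle_ineq[THEN order_trans])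
    also have "\<dots> \<le> max M1 0 * (L2 * dist x y) + max M2 0 * (L1 * dist x y)"
      by (intro add_mono mult_mono a d1 d2) auto
    finally show "dist (f x * g x) (f y * g y) \<le> (max M1 0 * L2 + max M2 0 * L1) * dist x y"
      by (simp add: dist_real_def algebra_simps)
  qed (use L1 L2 in auto)
  assume "x \<in> S"
  then have "\<bar>f x\<bar> \<le> max M1 0" "\<bar>g x\<bar> \<le> max M2 0" using m1 m2 by force+
  then show "\<bar>f x * g x\<bar> \<le> max M1 0 * max M2 0" by (simp add: abs_mult mult_mono)
qed

lemma max0_le: "\<bar>max a 0 - max b 0\<bar> \<le> \<bar>a - b\<bar>" for a b :: real
  by (auto simp: max_def)

lemma blip_max0: "blip S f \<Longrightarrow> blip S (\<lambda>x. max (f x) 0)"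
  unfolding blip_def
proof (elim conjE exE, intro conjI exI ballI)
  fix L M x
  assume l: "L-lipschitz_on S f" and m: "\<forall>x\<in>S. \<bar>f x\<bar> \<le> M"
  show "L-lipschitz_on S (\<lambda>x. max (f x) 0)"
  proof (rule lipschitz_onI)
    fix x y assume xy: "x \<in> S" "y \<in> S"
    have "dist (max (f x) 0) (max (f y) 0) \<le> dist (f x) (f y)" unfolding dist_real_def by (rule max0_le)
    also have "\<dots> \<le> L * dist x y" by (rule lipschitz_onD[OF l xy])
    finally show "dist (max (f x) 0) (max (f y) 0) \<le> L * dist x y" .
  qed (use l in \<open>auto dest: lipschitz_on_nonneg\<close>)
  assume "x \<in> S"
  then show "\<bar>max (f x) 0\<bar> \<le> M" using m by force
qed

lemma blip_lip1:
  assumes "\<And>x y. x \<in> S \<Longrightarrow> y \<in> S \<Longrightarrow> dist (f x) (f y) \<le> dist x y"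
    and "\<And>x. x \<in> S \<Longrightarrow> \<bar>f x\<bar> \<le> M"
  shows "blip S f"
  unfolding blip_def
proof (intro conjI)
  show "\<exists>L. L-lipschitz_on S f" by (rule exI[of _ 1], rule lipschitz_onI) (use assms in auto)
  show "\<exists>M. \<forall>x\<in>S. \<bar>f x\<bar> \<le> M" using assms by blast
qed

lemma cball_norm: "p \<in> cball z r \<Longrightarrow> norm p \<le> norm z + r"
  by (metis add.commute dist_norm mem_cball norm_triangle_sub order_trans add_le_cancel_left norm_minus_commute)

lemma blip_fst_nth: "blip (cball (z :: (real^3) \<times> real) r) (\<lambda>p. fst p $ i)"
proof (rule blip_lip1)
  fix p q :: "(real^3) \<times> real"
  show "dist (fst p $ i) (fst q $ i) \<le> dist p q"
    using dist_vec_nth_le[of "fst p" i "fst q"] dist_fst_le[of p q] by linarith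
next
  fix p :: "(real^3) \<times> real" assume "p \<in> cball z r"
  then have "norm p \<le> norm z + r" by (rule cball_norm)
  moreover have "\<bar>fst p $ i\<bar> \<le> norm (fst p)" by (rule component_le_norm_cart)
  moreover have "norm (fst p) \<le> norm p" using norm_fst_le[of "fst p" "snd p"] by simp
  ultimately show "\<bar>fst p $ i\<bar> \<le> norm z + r" by linarith
qed

lemma blip_snd: "blip (cball (z :: (real^3) \<times> real) r) (\<lambda>p. snd p)"
proof (rule blip_lip1)
  fix p q :: "(real^3) \<times> real"
  show "dist (snd p) (snd q) \<le> dist p q" by (rule dist_snd_le)
next
  fix p :: "(real^3) \<times> real" assume "p \<in> cball z r"
  then have "norm p \<le> norm z + r" by (rule cball_norm)
  moreover have "norm (snd p) \<le> norm p" using norm_snd_le[of "snd p" "fst p"] by simp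
  ultimately show "\<bar>snd p\<bar> \<le> norm z + r" by simp
qed

lemma blip_nth: "blip (cball (z :: real^3) r) (\<lambda>x. x $ i)"
proof (rule blip_lip1)
  fix p q :: "real^3"
  show "dist (p $ i) (q $ i) \<le> dist p q" by (rule dist_vec_nth_le)
next
  fix p :: "real^3" assume "p \<in> cball z r"
  then have "norm p \<le> norm z + r" by (rule cball_norm)
  moreover have "\<bar>p $ i\<bar> \<le> norm p" by (rule component_le_norm_cart)
  ultimately show "\<bar>p $ i\<bar> \<le> norm z + r" by linarith
qed

lemma blip_lip: "blip S f \<Longrightarrow> \<exists>L. L-lipschitz_on S f"
  unfolding blip_def by blast

lemma lip_vec3:
  fixes F :: "'a::metric_space \<Rightarrow> real^3"
  assumes "L1-lipschitz_on S (\<lambda>x. F x $ 1)" "L2-lipschitz_on S (\<lambda>x. F x $ 2)" "L3-lipschitz_on S (\<lambda>x. F x $ 3)"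
  shows "(L1 + L2 + L3)-lipschitz_on S F"
proof (rule lipschitz_onI)
  fix x y assume xy: "x \<in> S" "y \<in> S"
  have "dist (F x) (F y) \<le> (\<Sum>i\<in>UNIV. \<bar>(F x - F y) $ i\<bar>)" unfolding dist_norm by (rule norm_le_l1_cart)
  also have "\<dots> = dist (F x $ 1) (F y $ 1) + dist (F x $ 2) (F y $ 2) + dist (F x $ 3) (F y $ 3)"
    by (simp add: sum_3 dist_real_def)
  also have "\<dots> \<le> L1 * dist x y + L2 * dist x y + L3 * dist x y"
    by (intro add_mono lipschitz_onD[OF assms(1) xy] lipschitz_onD[OF assms(2) xy] lipschitz_onD[OF assms(3) xy])
  finally show "dist (F x) (F y) \<le> (L1 + L2 + L3) * dist x y" by (simp add: algebra_simps)
qed (use lipschitz_on_nonneg[OF assms(1)] lipschitz_on_nonneg[OF assms(2)] lipschitz_on_nonneg[OF assms(3)] in linarith)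

lemma fex_lip: "loc_lipschitz (\<lambda>(x, u). fex x u)"
  unfolding loc_lipschitz_def
proof (intro allI)
  fix z :: "(real^3) \<times> real"
  let ?S = "cball z 1"
  have b1: "blip ?S (\<lambda>p. fst p $ 1)" and b2: "blip ?S (\<lambda>p. fst p $ 2)" and b3: "blip ?S (\<lambda>p. snd p)"
    by (rule blip_fst_nth blip_snd)+
  have c1: "blip ?S (\<lambda>p. fex (fst p) (snd p) $ 1)"
    unfolding fex_nth F1_def power2_eq_square
    by (intro blip_diff blip_minus blip_mult blip_add b1 b2)
  have c2: "blip ?S (\<lambda>p. fex (fst p) (snd p) $ 2)"
    unfolding fex_nth F2_def power2_eq_square
    by (intro blip_diff blip_minus blip_mult blip_add b1 b2)
  have c3: "blip ?S (\<lambda>p. fex (fst p) (snd p) $ 3)"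
    unfolding fex_nth
    by (intro blip_mult blip_max0 blip_minus b1 b3 blip_const)
  obtain L1 L2 L3 where "L1-lipschitz_on ?S (\<lambda>p. fex (fst p) (snd p) $ 1)"
    "L2-lipschitz_on ?S (\<lambda>p. fex (fst p) (snd p) $ 2)" "L3-lipschitz_on ?S (\<lambda>p. fex (fst p) (snd p) $ 3)"
    using blip_lip[OF c1] blip_lip[OF c2] blip_lip[OF c3] by blast
  from lip_vec3[OF this]
  have "\<exists>L. L-lipschitz_on ?S (\<lambda>(x, u). fex x u)" by (auto simp: case_prod_unfold)
  then show "\<exists>r>0. \<exists>L. L-lipschitz_on (cball z r) (\<lambda>(x, u). fex x u)" by (rule_tac exI[of _ 1]) simp
qed

lemma hex_lip: "loc_lipschitz hex"
  unfolding loc_lipschitz_def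
proof (intro allI)
  fix z :: "real^3"
  have "blip (cball z 1) hex"
    unfolding hex_def[abs_def] power2_eq_square
    by (intro blip_mult blip_max0 blip_nth)
  then have "\<exists>L. L-lipschitz_on (cball z 1) hex" using blip_lip by blast
  then show "\<exists>r>0. \<exists>L. L-lipschitz_on (cball z r) hex" by (rule_tac exI[of _ 1]) simp
qed

lemma fex00: "fex 0 0 = 0" by (simp add: vec3_eq F1_def F2_def)
lemma hex0: "hex 0 = 0" by (simp add: hex_def)

theorem lemma2p5:
  "\<exists>(f :: real^3 \<Rightarrow> real \<Rightarrow> real^3) (h :: real^3 \<Rightarrow> real).
     loc_lipschitz (\<lambda>(x, u). f x u) \<and> loc_lipschitz h \<and> f 0 0 = 0 \<and> h 0 = 0 \<and>
     ROS f h \<and> \<not> IOS f h"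
proof (rule exI[of _ fex], rule exI[of _ hex])
  show "loc_lipschitz (\<lambda>(x, u). fex x u) \<and> loc_lipschitz hex \<and> fex 0 0 = 0 \<and> hex 0 = 0 \<and>
     ROS fex hex \<and> \<not> IOS fex hex"
    using fex_lip hex_lip fex00 hex0 ROS_ex not_IOS by blast
qed

end
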